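(* Consider the static load balancing game with $m$ servers and $n$ players described in the context. There exists a function $\Phi$ on the set of action profiles $A_1\times\cdots\times A_n$ such that for every player $i\in[n]$ and any two action profiles $(a_i,a_{-i})$ and $(a'_i,a_{-i})$ that differ only in the action of player $i$, $$\Phi(a_i,a_{-i})-\Phi(a'_i,a_{-i})=D_i(a_i,a_{-i})-D_i(a'_i,a_{-i}),$$ i.e., the game is an exact potential game. In particular, the game admits a pure Nash equilibrium, and the best-response dynamics (players sequentially replacing their action by a best response to the current actions of the others) converge to a pure Nash equilibrium.
   Context: Static load balancing game: there are $m$ servers $[m]=\{1,\dots,m\}$ with service rates $\mu_j>0$ and initial loads $s_j^0\ge 0$, and $n$ players $[n]=\{1,\dots,n\}$; player $i$ holds a job of length $\lambda_i>0$ which it can split fractionally among servers. Player $i$'s action set is the probability simplex $A_i=\{a_i=(a_{i1},\dots,a_{im}):\sum_{j=1}^m a_{ij}=1,\ a_{ij}\ge 0\}$, where $a_{ij}$ is the fraction of job $i$ placed on server $j$. Given an action profile $a=(a_1,\dots,a_n)$, the cost of player $i$ is $$D_i(a)=\sum_{j=1}^m \lambda_i a_{ij}\left(\frac{\lambda_i a_{ij}}{2\mu_j}+\frac{s_j^0+\sum_{k\neq i}\lambda_k a_{kj}}{\mu_j}\right),$$ and each player wishes to minimize its own cost. A pure Nash equilibrium is a profile $a$ with $D_i(a_i,a_{-i})\le D_i(a_i',a_{-i})$ for all $i$ and all $a_i'\in A_i$. *)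

theory Defs
  imports "HOL-Analysis.Analysis" "HOL-Library.FuncSet"
begin

definition action_simplex :: "nat \<Rightarrow> (nat \<Rightarrow> real) set" where
  "action_simplex m = {b \<in> {..<m} \<rightarrow>\<^sub>E UNIV. (\<forall>j<m. b j \<ge> 0) \<and> (\<Sum>j<m. b j) = 1}"

definition action_profiles :: "nat \<Rightarrow> nat \<Rightarrow> (nat \<Rightarrow> nat \<Rightarrow> real) set" where
  "action_profiles n m = {..<n} \<rightarrow>\<^sub>E action_simplex m"

text \<open>Cost D_i(a) of player i (lam = job lengths, mu = service rates, s0 = initial loads).\<close>
definition cost ::
  "nat \<Rightarrow> nat \<Rightarrow> (nat \<Rightarrow> real) \<Rightarrow> (nat \<Rightarrow> real) \<Rightarrow> (nat \<Rightarrow> real)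
     \<Rightarrow> (nat \<Rightarrow> nat \<Rightarrow> real) \<Rightarrow> nat \<Rightarrow> real" where
  "cost n m lam mu s0 a i =
     (\<Sum>j<m. lam i * a i j *
        (lam i * a i j / (2 * mu j) + (s0 j + (\<Sum>k\<in>{..<n} - {i}. lam k * a k j)) / mu j))"

definition is_best_response ::
  "nat \<Rightarrow> nat \<Rightarrow> (nat \<Rightarrow> real) \<Rightarrow> (nat \<Rightarrow> real) \<Rightarrow> (nat \<Rightarrow> real)
     \<Rightarrow> (nat \<Rightarrow> nat \<Rightarrow> real) \<Rightarrow> nat \<Rightarrow> (nat \<Rightarrow> real) \<Rightarrow> bool" where
  "is_best_response n m lam mu s0 a i b \<longleftrightarrow>
     b \<in> action_simplex m \<and>
     (\<forall>b'\<in>action_simplex m. cost n m lam mu s0 (a(i := b)) i \<le> cost n m lam mu s0 (a(i := b')) i)"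

definition pure_NE ::
  "nat \<Rightarrow> nat \<Rightarrow> (nat \<Rightarrow> real) \<Rightarrow> (nat \<Rightarrow> real) \<Rightarrow> (nat \<Rightarrow> real)
     \<Rightarrow> (nat \<Rightarrow> nat \<Rightarrow> real) \<Rightarrow> bool" where
  "pure_NE n m lam mu s0 a \<longleftrightarrow>
     a \<in> action_profiles n m \<and>
     (\<forall>i<n. \<forall>b\<in>action_simplex m. cost n m lam mu s0 a i \<le> cost n m lam mu s0 (a(i := b)) i)"

definition br_dynamics ::
  "nat \<Rightarrow> nat \<Rightarrow> (nat \<Rightarrow> real) \<Rightarrow> (nat \<Rightarrow> real) \<Rightarrow> (nat \<Rightarrow> real)
     \<Rightarrow> (nat \<Rightarrow> nat \<Rightarrow> nat \<Rightarrow> real) \<Rightarrow> bool" where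
  "br_dynamics n m lam mu s0 x \<longleftrightarrow>
     x 0 \<in> action_profiles n m \<and>
     (\<forall>t. \<exists>b. is_best_response n m lam mu s0 (x t) (t mod n) b \<and>
              x (Suc t) = (x t)(t mod n := b))"

end

theory Submission
  imports Defs
begin


locale LB =
  fixes n m :: nat and lam mu s0 :: "nat \<Rightarrow> real"
  assumes n1: "n \<ge> 1" and m1: "m \<ge> 1" and mu_pos: "\<forall>j<m. mu j > 0"
    and s0_nn: "\<forall>j<m. s0 j \<ge> 0" and lam_pos: "\<forall>i<n. lam i > 0"
begin

definition Ld where "Ld a j = (\<Sum>k<n. lam k * a k j)"
definition lv where "lv a j = (s0 j + Ld a j) / mu j"
definition Phi where "Phi a = (\<Sum>j<m. (s0 j + Ld a j)^2 / (2 * mu j))"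

lemma Ld_split: "i < n \<Longrightarrow> Ld a j = lam i * a i j + (\<Sum>k\<in>{..<n} - {i}. lam k * a k j)"
  unfolding Ld_def by (simp add: sum.remove)

lemma Ld_upd: "i < n \<Longrightarrow> Ld (a(i:=b)) j = Ld a j + lam i * (b j - a i j)"
proof -
  assume i: "i < n"
  have "(\<Sum>k\<in>{..<n} - {i}. lam k * (a(i:=b)) k j) = (\<Sum>k\<in>{..<n} - {i}. lam k * a k j)"
    by (rule sum.cong) auto
  then show ?thesis using Ld_split[OF i, of a j] Ld_split[OF i, of "a(i:=b)" j]
    by (simp add: algebra_simps)
qed

lemma pot:
  assumes i: "i < n"
  shows "Phi a - Phi (a(i:=b)) = cost n m lam mu s0 a i - cost n m lam mu s0 (a(i:=b)) i"
proof -
  define R where "R j = s0 j + (\<Sum>k\<in>{..<n} - {i}. lam k * a k j)" for j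
  have R2: "(\<Sum>k\<in>{..<n} - {i}. lam k * (a(i:=b)) k j) = (\<Sum>k\<in>{..<n} - {i}. lam k * a k j)" for j
    by (rule sum.cong) auto
  have e: "Phi c - cost n m lam mu s0 c i = (\<Sum>j<m. (R j)^2 / (2 * mu j))"
    if "c = a \<or> c = a(i:=b)" for c
  proof -
    have r: "s0 j + (\<Sum>k\<in>{..<n} - {i}. lam k * c k j) = R j" for j
      using that R2 unfolding R_def by auto
    have "Phi c - cost n m lam mu s0 c i = (\<Sum>j<m. (s0 j + Ld c j)^2 / (2 * mu j) -
        lam i * c i j * (lam i * c i j / (2 * mu j) + (s0 j + (\<Sum>k\<in>{..<n} - {i}. lam k * c k j)) / mu j))"
      unfolding Phi_def cost_def by (simp add: sum_subtractf)
    also have "\<dots> = (\<Sum>j<m. (R j)^2 / (2 * mu j))"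
    proof (rule sum.cong)
      fix j assume "j \<in> {..<m}"
      have "Ld c j = lam i * c i j + (R j - s0 j)" using Ld_split[OF i, of c j] r[of j] by simp
      moreover have "mu j > 0" using mu_pos \<open>j \<in> {..<m}\<close> by auto
      ultimately show "(s0 j + Ld c j)^2 / (2 * mu j) -
        lam i * c i j * (lam i * c i j / (2 * mu j) + (s0 j + (\<Sum>k\<in>{..<n} - {i}. lam k * c k j)) / mu j)
        = (R j)^2 / (2 * mu j)" unfolding r
        by (simp add: field_simps power2_eq_square)
    qed simp
    finally show ?thesis .
  qed
  show ?thesis using e[of a] e[of "a(i:=b)"] by simp
qed

lemma mu_pos': "j < m \<Longrightarrow> mu j > 0" using mu_pos by auto
lemma lam_pos': "i < n \<Longrightarrow> lam i > 0" using lam_pos by auto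

lemma expand:
  "Phi x - Phi q = (\<Sum>j<m. lv q j * (Ld x j - Ld q j)) + (\<Sum>j<m. (Ld x j - Ld q j)^2 / (2 * mu j))"
proof -
  have "Phi x - Phi q = (\<Sum>j<m. (s0 j + Ld x j)^2 / (2 * mu j) - (s0 j + Ld q j)^2 / (2 * mu j))"
    unfolding Phi_def by (simp add: sum_subtractf)
  also have "\<dots> = (\<Sum>j<m. lv q j * (Ld x j - Ld q j) + (Ld x j - Ld q j)^2 / (2 * mu j))"
  proof (rule sum.cong)
    fix j assume "j \<in> {..<m}"
    then have "mu j > 0" by (simp add: mu_pos')
    then show "(s0 j + Ld x j)^2 / (2 * mu j) - (s0 j + Ld q j)^2 / (2 * mu j) =
      lv q j * (Ld x j - Ld q j) + (Ld x j - Ld q j)^2 / (2 * mu j)"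
      unfolding lv_def by (simp add: field_simps power2_eq_square)
  qed simp
  finally show ?thesis by (simp add: sum.distrib)
qed

lemma Ld_diff: "Ld x j - Ld q j = (\<Sum>i<n. lam i * (x i j - q i j))"
  unfolding Ld_def by (simp add: sum_subtractf algebra_simps)

definition Lam where "Lam = (\<Sum>i<n. lam i)"

lemma Lam_pos: "Lam > 0"
proof -
  have "0 \<in> {..<n}" using n1 by auto
  have "lam 0 \<le> Lam" unfolding Lam_def
    by (rule member_le_sum) (use n1 lam_pos in auto)
  moreover have "lam 0 > 0" using n1 lam_pos by auto
  ultimately show ?thesis by simp
qed

lemma c_ex: "\<exists>c\<ge>0. (\<Sum>j<m. max 0 (mu j * c - s0 j)) = Lam"
proof -
  define f where "f c = (\<Sum>j<m. max 0 (mu j * c - s0 j))" for c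
  define b where "b = (Lam + s0 0) / mu 0"
  have m0: "0 < m" using m1 by simp
  have mu0: "mu 0 > 0" using mu_pos' m0 by simp
  have s00: "s0 0 \<ge> 0" using s0_nn m0 by simp
  have f0: "f 0 = 0" unfolding f_def using s0_nn by (intro sum.neutral) auto
  have "max 0 (mu 0 * b - s0 0) \<le> f b" unfolding f_def
    by (rule member_le_sum[where f="\<lambda>j. max 0 (mu j * b - s0 j)"]) (use m0 in auto)
  moreover have "mu 0 * b - s0 0 = Lam" unfolding b_def using mu0 by simp
  ultimately have fb: "Lam \<le> f b" by simp
  have b0: "0 \<le> b" unfolding b_def using Lam_pos mu0 s00 by simp
  have "\<forall>x. 0 \<le> x \<and> x \<le> b \<longrightarrow> isCont f x"
    unfolding f_def by (auto intro!: continuous_intros)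
  from IVT[of f 0 Lam b, OF _ fb b0 this] f0 Lam_pos show ?thesis unfolding f_def by auto
qed

definition cs where "cs = (SOME c. c \<ge> 0 \<and> (\<Sum>j<m. max 0 (mu j * c - s0 j)) = Lam)"
lemma cs: "cs \<ge> 0" "(\<Sum>j<m. max 0 (mu j * cs - s0 j)) = Lam"
  using someI_ex[OF c_ex] unfolding cs_def by auto

definition Ls where "Ls j = max 0 (mu j * cs - s0 j)"
definition Sst where "Sst j \<longleftrightarrow> s0 j \<le> mu j * cs"

abbreviation P where "P \<equiv> action_profiles n m"
abbreviation S where "S \<equiv> action_simplex m"

definition isopt where "isopt q \<longleftrightarrow> q \<in> P \<and> (\<forall>j<m. Ld q j = Ls j) \<and> (\<forall>i<n. \<forall>j<m. \<not> Sst j \<longrightarrow> q i j = 0)"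

lemma P_simp: "a \<in> P \<Longrightarrow> i < n \<Longrightarrow> a i \<in> S"
  unfolding action_profiles_def by auto
lemma S_simp: assumes "b \<in> S" shows "\<And>j. j < m \<Longrightarrow> b j \<ge> 0" "(\<Sum>j<m. b j) = 1"
  using assms unfolding action_simplex_def by auto
lemma P_upd: "a \<in> P \<Longrightarrow> i < n \<Longrightarrow> b \<in> S \<Longrightarrow> a(i:=b) \<in> P"
  unfolding action_profiles_def by (auto simp: PiE_iff extensional_def)

lemma lv_opt:
  assumes "isopt q" "j < m"
  shows "Sst j \<Longrightarrow> lv q j = cs" "\<not> Sst j \<Longrightarrow> lv q j = s0 j / mu j" "lv q j \<ge> cs"
proof -
  have mu: "mu j > 0" using assms mu_pos' by simp
  have L: "Ld q j = Ls j" using assms unfolding isopt_def by simp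
  show "Sst j \<Longrightarrow> lv q j = cs" unfolding lv_def L Ls_def Sst_def using mu by (simp add: field_simps)
  show "\<not> Sst j \<Longrightarrow> lv q j = s0 j / mu j" unfolding lv_def L Ls_def Sst_def using mu by (simp add: field_simps)
  show "lv q j \<ge> cs" unfolding lv_def L Ls_def using mu by (simp add: field_simps)
qed

lemma sum_swap_lv: "(\<Sum>j<m. g j * (Ld x j - Ld q j)) = (\<Sum>i<n. lam i * (\<Sum>j<m. g j * (x i j - q i j)))"
  unfolding Ld_diff by (simp add: sum_distrib_left sum_distrib_right mult_ac sum.swap[of _ "{..<m}"])

lemma opt_lin:
  assumes q: "isopt q" and a: "a \<in> P"
  shows "(\<Sum>j<m. lv q j * (Ld a j - Ld q j)) \<ge> 0"
proof -
  have inner: "(\<Sum>j<m. lv q j * (a i j - q i j)) \<ge> 0" if i: "i < n" for i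
  proof -
    have ai: "a i \<in> S" using P_simp a i by simp
    have qP: "q \<in> P" using q unfolding isopt_def by simp
    have qi: "q i \<in> S" using P_simp qP i by simp
    have "(\<Sum>j<m. lv q j * a i j) \<ge> (\<Sum>j<m. cs * a i j)"
      by (rule sum_mono) (use lv_opt(3)[OF q] S_simp(1)[OF ai] in \<open>auto intro!: mult_right_mono\<close>)
    also have "(\<Sum>j<m. cs * a i j) = cs" using S_simp(2)[OF ai] by (simp add: sum_distrib_left[symmetric])
    also have "cs = (\<Sum>j<m. cs * q i j)" using S_simp(2)[OF qi] by (simp add: sum_distrib_left[symmetric])
    also have "\<dots> = (\<Sum>j<m. lv q j * q i j)"
    proof (rule sum.cong)
      fix j assume j: "j \<in> {..<m}"
      show "cs * q i j = lv q j * q i j"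
      proof (cases "Sst j")
        case True then show ?thesis using lv_opt(1)[OF q] j by simp
      next
        case False then have "q i j = 0" using q i j unfolding isopt_def by simp
        then show ?thesis by simp
      qed
    qed simp
    finally show ?thesis by (simp add: sum_subtractf algebra_simps)
  qed
  show ?thesis unfolding sum_swap_lv
    by (rule sum_nonneg, rule mult_nonneg_nonneg) (use inner lam_pos' in \<open>auto simp: less_imp_le\<close>)
qed

lemma opt_min:
  assumes q: "isopt q" and a: "a \<in> P"
  shows "Phi q + (\<Sum>j<m. (Ld a j - Ld q j)^2 / (2 * mu j)) \<le> Phi a"
  using expand[of a q] opt_lin[OF q a] by simp

lemma min_NE:
  assumes a: "a \<in> P" and q: "isopt q" and le: "Phi a \<le> Phi q"
  shows "pure_NE n m lam mu s0 a"
  unfolding pure_NE_def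
proof (intro conjI a allI impI ballI)
  fix i b assume i: "i < n" and b: "b \<in> S"
  have "Phi q \<le> Phi (a(i:=b))"
    using opt_min[OF q P_upd[OF a i b]] by (smt (verit) sum_nonneg divide_nonneg_pos zero_le_power2 mu_pos' lessThan_iff)
  then show "cost n m lam mu s0 a i \<le> cost n m lam mu s0 (a(i := b)) i"
    using pot[OF i, of a b] le by simp
qed

definition p0 where "p0 = (\<lambda>i\<in>{..<n}. \<lambda>j\<in>{..<m}. Ls j / Lam)"

lemma p0_opt: "isopt p0"
proof -
  have Ls0: "Ls j \<ge> 0" for j unfolding Ls_def by simp
  have "p0 i \<in> S" if "i < n" for i
    unfolding action_simplex_def p0_def using that Lam_pos Ls0 cs(2)
    by (auto simp: sum_divide_distrib[symmetric] Ls_def)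
  then have P: "p0 \<in> P" unfolding action_profiles_def p0_def by auto
  have "Ld p0 j = Ls j" if "j < m" for j
  proof -
    have "Ld p0 j = (\<Sum>k<n. lam k * Ls j / Lam)" unfolding Ld_def p0_def using that by simp
    also have "\<dots> = (\<Sum>k<n. lam k) * Ls j / Lam" by (simp add: sum_divide_distrib sum_distrib_right)
    finally show ?thesis using Lam_pos unfolding Lam_def by simp
  qed
  moreover have "p0 i j = 0" if "i < n" "j < m" "\<not> Sst j" for i j
    using that unfolding p0_def Ls_def Sst_def by simp
  ultimately show ?thesis unfolding isopt_def using P by auto
qed


end


context LB begin
lemma seg_S:
  assumes b: "b \<in> S" and w: "w \<in> S" and t: "0 \<le> t" "t \<le> 1"
  shows "(\<lambda>j. b j + t * (w j - b j)) \<in> S"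
proof -
  have bj: "j < m \<Longrightarrow> b j \<ge> 0" "j < m \<Longrightarrow> w j \<ge> 0" for j using S_simp(1) b w by auto
  have "b j + t * (w j - b j) = (1 - t) * b j + t * w j" for j by (simp add: algebra_simps)
  then have nn: "j < m \<Longrightarrow> b j + t * (w j - b j) \<ge> 0" for j using bj t by simp
  have "(\<Sum>j<m. b j + t * (w j - b j)) = 1"
    using S_simp(2)[OF b] S_simp(2)[OF w] by (simp add: sum.distrib sum_subtractf sum_distrib_left[symmetric])
  moreover have "j \<notin> {..<m} \<Longrightarrow> b j + t * (w j - b j) = undefined" for j
    using b w unfolding action_simplex_def by (auto simp: PiE_iff extensional_def)
  ultimately show ?thesis using nn unfolding action_simplex_def by (auto simp: PiE_iff extensional_def)
qed

lemma quad_pos: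
  fixes A B :: real
  assumes h: "\<And>t. 0 < t \<Longrightarrow> t \<le> 1 \<Longrightarrow> A * t + B * t^2 \<ge> 0"
  shows "A \<ge> 0"
proof (rule ccontr)
  assume "\<not> A \<ge> 0" then have A: "A < 0" by simp
  define t where "t = min 1 (- A / (\<bar>B\<bar> + 1))"
  have t0: "t > 0" unfolding t_def using A by (simp add: field_simps)
  have t1: "t \<le> 1" unfolding t_def by simp
  have "t \<le> - A / (\<bar>B\<bar> + 1)" unfolding t_def by simp
  then have "t * (\<bar>B\<bar> + 1) \<le> - A" by (simp add: field_simps)
  then have "A + \<bar>B\<bar> * t < 0" using t0 by (simp add: algebra_simps)
  then have "t * (A + \<bar>B\<bar> * t) < 0" using t0 by (simp add: mult_pos_neg)
  moreover have "A * t + B * t^2 \<le> t * (A + \<bar>B\<bar> * t)"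
    using t0 by (simp add: power2_eq_square algebra_simps mult_right_mono abs_ge_self)
  ultimately show False using h[OF t0 t1] by simp
qed

lemma Ld_upd2: "i < n \<Longrightarrow> Ld (a(i:=c)) j - Ld (a(i:=b)) j = lam i * (c j - b j)"
  using Ld_upd[of i a c j] Ld_upd[of i a b j] by (simp add: algebra_simps)

lemma Phi_upd2:
  assumes i: "i < n"
  shows "Phi (a(i:=c)) - Phi (a(i:=b)) = lam i * (\<Sum>j<m. lv (a(i:=b)) j * (c j - b j))
      + (\<Sum>j<m. (lam i * (c j - b j))^2 / (2 * mu j))"
  using expand[of "a(i:=c)" "a(i:=b)"] unfolding Ld_upd2[OF i]
  by (simp add: sum_distrib_left mult_ac)

lemma BR_VI:
  assumes a: "a \<in> P" and i: "i < n" and br: "is_best_response n m lam mu s0 a i b"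
  shows "\<forall>w\<in>S. (\<Sum>j<m. lv (a(i:=b)) j * (w j - b j)) \<ge> 0"
proof
  fix w assume w: "w \<in> S"
  have b: "b \<in> S" using br unfolding is_best_response_def by simp
  define G where "G = (\<Sum>j<m. lv (a(i:=b)) j * (w j - b j))"
  define Q where "Q = (\<Sum>j<m. (lam i * (w j - b j))^2 / (2 * mu j))"
  have h: "lam i * G * t + Q * t^2 \<ge> 0" if t: "0 < t" "t \<le> 1" for t
  proof -
    define wt where "wt = (\<lambda>j. b j + t * (w j - b j))"
    have wtS: "wt \<in> S" unfolding wt_def using seg_S[OF b w] t by simp
    have "cost n m lam mu s0 (a(i:=b)) i \<le> cost n m lam mu s0 (a(i:=wt)) i"
      using br wtS unfolding is_best_response_def by simp
    moreover have "Phi (a(i:=wt)) - Phi (a(i:=b)) = cost n m lam mu s0 (a(i:=wt)) i - cost n m lam mu s0 (a(i:=b)) i"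
      using pot[OF i, of "a(i:=wt)" b] by simp
    moreover have "Phi (a(i:=wt)) - Phi (a(i:=b)) = lam i * G * t + Q * t^2"
    proof -
      have "Phi (a(i:=wt)) - Phi (a(i:=b)) = lam i * (\<Sum>j<m. lv (a(i:=b)) j * (t * (w j - b j)))
        + (\<Sum>j<m. (lam i * (t * (w j - b j)))^2 / (2 * mu j))"
        using Phi_upd2[OF i, of a wt b] unfolding wt_def by simp
      also have "\<dots> = lam i * G * t + Q * t^2"
      proof -
        have 1: "(\<Sum>j<m. lv (a(i:=b)) j * (t * (w j - b j))) = G * t"
          unfolding G_def sum_distrib_right by (rule sum.cong) auto
        have 2: "(\<Sum>j<m. (lam i * (t * (w j - b j)))^2 / (2 * mu j)) = Q * t^2"
          unfolding Q_def sum_distrib_right by (rule sum.cong) (auto simp: power_mult_distrib)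
        show ?thesis unfolding 1 2 by simp
      qed
      finally show ?thesis .
    qed
    ultimately show ?thesis by simp
  qed
  have "lam i * G \<ge> 0" by (rule quad_pos[of "lam i * G" Q]) (rule h)
  moreover have "lam i > 0" using lam_pos' i by simp
  ultimately show "G \<ge> 0" by (simp add: zero_le_mult_iff)
qed

lemma BR_dec:
  assumes a: "a \<in> P" and i: "i < n" and br: "is_best_response n m lam mu s0 a i b"
  shows "Phi a - Phi (a(i:=b)) \<ge> (\<Sum>j<m. (Ld a j - Ld (a(i:=b)) j)^2 / (2 * mu j))"
proof -
  have ai: "a i \<in> S" using P_simp a i by simp
  have "a = a(i := a i)" by simp
  then have "Phi a - Phi (a(i:=b)) = lam i * (\<Sum>j<m. lv (a(i:=b)) j * (a i j - b j))
      + (\<Sum>j<m. (lam i * (a i j - b j))^2 / (2 * mu j))"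
    using Phi_upd2[OF i, of a "a i" b] by simp
  moreover have "(\<Sum>j<m. lv (a(i:=b)) j * (a i j - b j)) \<ge> 0" using BR_VI[OF a i br] ai by simp
  moreover have "Ld a j - Ld (a(i:=b)) j = lam i * (a i j - b j)" for j
    using Ld_upd2[OF i, where a=a and c="a i" and b=b and j=j] by simp
  ultimately show ?thesis using lam_pos'[OF i] by simp
qed

lemma VI_support:
  assumes b: "b \<in> S" and vi: "\<forall>w\<in>S. (\<Sum>l<m. g l * (w l - b l)) \<ge> 0"
    and j: "j < m" and k: "k < m" and bj: "b j > 0"
  shows "g j \<le> g k"
proof (cases "j = k")
  case True then show ?thesis by simp
next
  case False
  define e where "e l = (if l = k then 1 else 0) - (if l = j then (1::real) else 0)" for l
  define w where "w l = b l + b j * e l" for l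
  have "(\<Sum>l<m. e l) = 0" unfolding e_def using j k by (simp add: sum_subtractf)
  then have s1: "(\<Sum>l<m. w l) = 1" unfolding w_def using S_simp(2)[OF b]
    by (simp add: sum.distrib sum_distrib_left[symmetric])
  have nn: "l < m \<Longrightarrow> w l \<ge> 0" for l
    unfolding w_def e_def using S_simp(1)[OF b] False bj by auto
  have ext: "l \<notin> {..<m} \<Longrightarrow> w l = undefined" for l
    unfolding w_def e_def using j k b unfolding action_simplex_def by (auto simp: PiE_iff extensional_def)
  have wS: "w \<in> S" unfolding action_simplex_def using s1 nn ext by (auto simp: PiE_iff extensional_def)
  have "(\<Sum>l<m. g l * (w l - b l)) = b j * (\<Sum>l<m. g l * e l)"
    unfolding w_def by (simp add: sum_distrib_left mult_ac)
  also have "(\<Sum>l<m. g l * e l) = g k - g j"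
  proof -
    have "g l * e l = (if l = k then g l else 0) - (if l = j then g l else 0)" for l
      unfolding e_def by simp
    then have "(\<Sum>l<m. g l * e l) = (\<Sum>l<m. (if l = k then g l else 0)) - (\<Sum>l<m. (if l = j then g l else 0))"
      by (simp add: sum_subtractf)
    also have "\<dots> = g k - g j" using j k by (simp add: sum.delta)
    finally show ?thesis .
  qed
  finally have eq: "(\<Sum>l<m. g l * (w l - b l)) = b j * (g k - g j)" .
  have "(\<Sum>l<m. g l * (w l - b l)) \<ge> 0" using vi wS by blast
  then have "b j * (g k - g j) \<ge> 0" using eq by simp
  then show ?thesis using bj by (simp add: zero_le_mult_iff)
qed

end


context LB begin

lemma Ld_nn: "a \<in> P \<Longrightarrow> Ld a j \<ge> 0" if "j < m" for j
  using that unfolding Ld_def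
  by (intro sum_nonneg mult_nonneg_nonneg) (auto intro: less_imp_le lam_pos' S_simp(1) P_simp)

lemma sum_Ld: "a \<in> P \<Longrightarrow> (\<Sum>j<m. Ld a j) = Lam"
proof -
  assume a: "a \<in> P"
  have "(\<Sum>j<m. Ld a j) = (\<Sum>i<n. lam i * (\<Sum>j<m. a i j))"
    unfolding Ld_def by (simp add: sum.swap[of _ "{..<m}"] sum_distrib_left)
  also have "\<dots> = (\<Sum>i<n. lam i)" using S_simp(2) P_simp a by simp
  finally show ?thesis unfolding Lam_def .
qed

lemma sum_Ls: "(\<Sum>j<m. Ls j) = Lam" using cs(2) unfolding Ls_def .

lemma hoffman:
  assumes y: "y \<in> P" and out: "\<forall>i<n. \<forall>j<m. \<not> Sst j \<longrightarrow> y i j = 0"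
  shows "\<exists>q. isopt q \<and> (\<Sum>i<n. lam i * (\<Sum>j<m. \<bar>y i j - q i j\<bar>)) \<le> 2 * (\<Sum>j<m. \<bar>Ld y j - Ls j\<bar>)"
proof -
  define L where "L j = Ld y j" for j
  define e where "e j = max 0 (L j - Ls j)" for j
  define f where "f j = max 0 (Ls j - L j)" for j
  define E where "E = (\<Sum>j<m. e j)"
  define r where "r j = (if L j = 0 then 0 else e j / L j)" for j
  define h where "h i = (\<Sum>j<m. y i j * r j)" for i
  define q where "q = (\<lambda>i\<in>{..<n}. \<lambda>j\<in>{..<m}. y i j * (1 - r j) + h i * f j / E)"
  have L0: "j < m \<Longrightarrow> L j \<ge> 0" for j unfolding L_def using Ld_nn y by simp
  have Ls0: "Ls j \<ge> 0" for j unfolding Ls_def by simp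
  have e0: "e j \<ge> 0" "f j \<ge> 0" for j unfolding e_def f_def by auto
  have ef: "e j - f j = L j - Ls j" for j unfolding e_def f_def by auto
  have eL: "j < m \<Longrightarrow> e j \<le> L j" for j unfolding e_def using L0 Ls0 by auto
  have Lr: "j < m \<Longrightarrow> L j * r j = e j" for j
    unfolding r_def using eL[of j] e0[of j] by auto
  have r01: "j < m \<Longrightarrow> 0 \<le> r j \<and> r j \<le> 1" for j
    unfolding r_def using eL[of j] e0[of j] L0[of j] by (auto simp: field_simps)
  have yS: "i < n \<Longrightarrow> y i \<in> S" for i using P_simp y by simp
  have y0: "i < n \<Longrightarrow> j < m \<Longrightarrow> y i j \<ge> 0" for i j using yS S_simp(1) by blast
  have y1: "i < n \<Longrightarrow> (\<Sum>j<m. y i j) = 1" for i using yS S_simp(2) by blast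
  have E0: "E \<ge> 0" unfolding E_def using e0 by (simp add: sum_nonneg)
  have sumf: "(\<Sum>j<m. f j) = E"
  proof -
    have "(\<Sum>j<m. e j) - (\<Sum>j<m. f j) = (\<Sum>j<m. L j) - (\<Sum>j<m. Ls j)"
      using ef by (simp add: sum_subtractf[symmetric])
    also have "\<dots> = 0" unfolding L_def using sum_Ld[OF y] sum_Ls by simp
    finally show ?thesis unfolding E_def by simp
  qed
  have h0: "i < n \<Longrightarrow> h i \<ge> 0" for i unfolding h_def using y0 r01 by (auto intro!: sum_nonneg)
  have sumh: "(\<Sum>i<n. lam i * h i) = E"
  proof -
    have "(\<Sum>i<n. lam i * h i) = (\<Sum>j<m. L j * r j)"
      unfolding h_def L_def Ld_def
      by (simp add: sum_distrib_left sum_distrib_right sum.swap[of _ "{..<m}"] mult_ac)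
    also have "\<dots> = E" unfolding E_def using Lr by simp
    finally show ?thesis .
  qed
  have E0case: "E = 0 \<Longrightarrow> j < m \<Longrightarrow> e j = 0 \<and> f j = 0" for j
  proof -
    assume E: "E = 0" and j: "j < m"
    have "e j = 0" using E unfolding E_def using e0 j by (simp add: sum_nonneg_eq_0_iff)
    moreover have "f j = 0" using E sumf e0 j by (simp add: sum_nonneg_eq_0_iff)
    ultimately show ?thesis by simp
  qed
  have fE: "j < m \<Longrightarrow> f j / E * E = f j" for j using E0case[of j] by (cases "E = 0") auto
  have qv: "i < n \<Longrightarrow> j < m \<Longrightarrow> q i j = y i j * (1 - r j) + h i * f j / E" for i j
    unfolding q_def by simp
  have qS: "q i \<in> S" if i: "i < n" for i
  proof -
    have nn: "j < m \<Longrightarrow> q i j \<ge> 0" for j using qv[OF i] y0[OF i] r01 h0[OF i] e0 E0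
      by (auto intro!: add_nonneg_nonneg mult_nonneg_nonneg divide_nonneg_nonneg)
    have "(\<Sum>j<m. q i j) = (\<Sum>j<m. y i j - y i j * r j + h i * (f j / E))"
      by (rule sum.cong) (simp_all add: qv[OF i] algebra_simps)
    also have "\<dots> = (\<Sum>j<m. y i j) - (\<Sum>j<m. y i j * r j) + (\<Sum>j<m. h i * (f j / E))"
      by (simp add: sum.distrib sum_subtractf)
    also have "(\<Sum>j<m. h i * (f j / E)) = h i * ((\<Sum>j<m. f j) / E)"
      by (simp add: sum_distrib_left sum_divide_distrib)
    finally have "(\<Sum>j<m. q i j) = (\<Sum>j<m. y i j) - h i + h i * ((\<Sum>j<m. f j) / E)"
      unfolding h_def .
    also have "\<dots> = 1"
    proof (cases "E = 0")
      case True
      then have "h i = 0" unfolding h_def r_def using E0case by (auto intro!: sum.neutral)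
      then show ?thesis using y1[OF i] by simp
    next
      case False then show ?thesis using y1[OF i] sumf by simp
    qed
    finally have s1: "(\<Sum>j<m. q i j) = 1" .
    have ext: "q i \<in> {..<m} \<rightarrow>\<^sub>E UNIV" unfolding q_def using i by auto
    show ?thesis unfolding action_simplex_def using ext nn s1 by auto
  qed
  have qP: "q \<in> P" unfolding action_profiles_def using qS by (auto simp: q_def PiE_iff)
  have qL: "Ld q j = Ls j" if j: "j < m" for j
  proof -
    have "Ld q j = (\<Sum>i<n. lam i * (y i j * (1 - r j) + h i * f j / E))"
      unfolding Ld_def using qv j by simp
    also have "\<dots> = (\<Sum>i<n. (lam i * y i j) * (1 - r j) + (lam i * h i) * (f j / E))"
      by (rule sum.cong) (simp_all add: algebra_simps)
    also have "\<dots> = (\<Sum>i<n. lam i * y i j) * (1 - r j) + (\<Sum>i<n. lam i * h i) * (f j / E)"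
      by (simp add: sum.distrib sum_distrib_right sum_divide_distrib)
    also have "\<dots> = L j * (1 - r j) + (\<Sum>i<n. lam i * h i) * (f j / E)"
      unfolding L_def Ld_def ..
    also have "\<dots> = L j - e j + f j" using Lr[OF j] fE[OF j] unfolding sumh by (simp add: algebra_simps)
    also have "\<dots> = Ls j" using ef[of j] by simp
    finally show ?thesis .
  qed
  have qout: "q i j = 0" if "i < n" "j < m" "\<not> Sst j" for i j
  proof -
    have "Ls j = 0" using that unfolding Ls_def Sst_def by simp
    then have "f j = 0" unfolding f_def using L0 that by simp
    then show ?thesis using qv that out r01 by simp
  qed
  have opt: "isopt q" unfolding isopt_def using qP qL qout by simp
  have dist: "(\<Sum>i<n. lam i * (\<Sum>j<m. \<bar>y i j - q i j\<bar>)) \<le> 2 * E"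
  proof -
    have "\<bar>y i j - q i j\<bar> \<le> y i j * r j + h i * f j / E" if "i < n" "j < m" for i j
    proof -
      have "y i j - q i j = y i j * r j - h i * f j / E" using qv that by (simp add: algebra_simps)
      moreover have "y i j * r j \<ge> 0" "h i * f j / E \<ge> 0"
        using y0 r01 h0 e0 E0 that by (auto intro!: mult_nonneg_nonneg divide_nonneg_nonneg)
      ultimately show ?thesis by linarith
    qed
    then have "(\<Sum>i<n. lam i * (\<Sum>j<m. \<bar>y i j - q i j\<bar>)) \<le> (\<Sum>i<n. lam i * (\<Sum>j<m. y i j * r j + h i * f j / E))"
      by (intro sum_mono mult_left_mono) (auto intro: less_imp_le lam_pos' intro!: sum_mono)
    also have "\<dots> = (\<Sum>i<n. lam i * h i + lam i * h i * ((\<Sum>j<m. f j) / E))"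
    proof (rule sum.cong)
      fix i assume "i \<in> {..<n}"
      have "(\<Sum>j<m. y i j * r j + h i * f j / E) = h i + h i * ((\<Sum>j<m. f j) / E)"
        unfolding h_def by (simp add: sum.distrib sum_distrib_left sum_divide_distrib)
      then show "lam i * (\<Sum>j<m. y i j * r j + h i * f j / E) = lam i * h i + lam i * h i * ((\<Sum>j<m. f j) / E)"
        by (simp add: algebra_simps)
    qed simp
    also have "\<dots> = (\<Sum>i<n. lam i * h i) + (\<Sum>i<n. lam i * h i) * ((\<Sum>j<m. f j) / E)"
      by (simp add: sum.distrib sum_distrib_right sum_divide_distrib)
    also have "\<dots> \<le> 2 * E" unfolding sumh sumf using E0 by (cases "E = 0") auto
    finally show ?thesis .
  qed
  have "E \<le> (\<Sum>j<m. \<bar>Ld y j - Ls j\<bar>)" unfolding E_def e_def L_def by (intro sum_mono) auto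
  then show ?thesis using opt dist by (intro exI[of _ q]) auto
qed

end



locale LBD = LB +
  fixes x :: "nat \<Rightarrow> nat \<Rightarrow> nat \<Rightarrow> real"
  assumes dyn: "br_dynamics n m lam mu s0 x"
begin

lemma modn: "t mod n < n" using n1 by simp

lemma stepex: "\<exists>b. is_best_response n m lam mu s0 (x t) (t mod n) b \<and> x (Suc t) = (x t)(t mod n := b)"
  using dyn unfolding br_dynamics_def by blast

lemma xP: "x t \<in> P"
proof (induction t)
  case 0 then show ?case using dyn unfolding br_dynamics_def by simp
next
  case (Suc t)
  obtain b where b: "is_best_response n m lam mu s0 (x t) (t mod n) b" "x (Suc t) = (x t)(t mod n := b)"
    using stepex by blast
  have "b \<in> S" using b(1) unfolding is_best_response_def by simp
  then show ?case unfolding b(2) by (rule P_upd[OF Suc modn])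
qed

lemma VI_t: "\<forall>w\<in>S. (\<Sum>j<m. lv (x (Suc t)) j * (w j - x (Suc t) (t mod n) j)) \<ge> 0"
proof -
  obtain b where b: "is_best_response n m lam mu s0 (x t) (t mod n) b" "x (Suc t) = (x t)(t mod n := b)"
    using stepex by blast
  show ?thesis using BR_VI[OF xP modn b(1)] b(2) by simp
qed

lemma x_other: "i \<noteq> t mod n \<Longrightarrow> x (Suc t) i = x t i"
proof -
  assume i: "i \<noteq> t mod n"
  obtain b where b: "x (Suc t) = (x t)(t mod n := b)" using stepex by blast
  show ?thesis using i unfolding b by simp
qed

definition E where "E t = (\<Sum>j<m. (Ld (x t) j - Ld (x (Suc t)) j)^2 / (2 * mu j))"

lemma dec: "Phi (x t) - Phi (x (Suc t)) \<ge> E t"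
proof -
  obtain b where b: "is_best_response n m lam mu s0 (x t) (t mod n) b" "x (Suc t) = (x t)(t mod n := b)"
    using stepex by blast
  show ?thesis using BR_dec[OF xP modn b(1)] b(2) unfolding E_def by simp
qed

lemma E_nn: "E t \<ge> 0"
  unfolding E_def by (intro sum_nonneg divide_nonneg_pos) (auto simp: mu_pos')

lemma opt_Phi: "isopt q \<Longrightarrow> Phi q = Phi p0"
proof -
  assume q: "isopt q"
  have qP: "q \<in> P" and p0P: "p0 \<in> P" using q p0_opt unfolding isopt_def by auto
  have nn: "(\<Sum>j<m. (Ld a j - Ld b j)^2 / (2 * mu j)) \<ge> 0" for a b
    by (intro sum_nonneg divide_nonneg_pos) (auto simp: mu_pos')
  show ?thesis using opt_min[OF q p0P] opt_min[OF p0_opt qP] nn[of p0 q] nn[of q p0] by linarith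
qed

definition gap where "gap t = Phi (x t) - Phi p0"

lemma gap_nn: "gap t \<ge> 0"
  using opt_min[OF p0_opt xP[of t]] unfolding gap_def
  by (smt (verit) sum_nonneg divide_nonneg_pos zero_le_power2 mu_pos' lessThan_iff)

lemma gap_dec: "gap (Suc t) \<le> gap t - E t"
  using dec[of t] unfolding gap_def by simp

lemma gap_mono: "t \<le> u \<Longrightarrow> gap u \<le> gap t"
proof (induction u rule: dec_induct)
  case base then show ?case by simp
next
  case (step u) then show ?case using gap_dec[of u] E_nn[of u] by simp
qed

lemma gap_conv: "\<exists>g. gap \<longlonglongrightarrow> g"
proof -
  have "decseq gap" unfolding decseq_def using gap_mono by blast
  moreover have "\<forall>t. 0 \<le> gap t" using gap_nn by blast
  ultimately show ?thesis using decseq_convergent by blast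
qed

lemma E_lim: "E \<longlonglongrightarrow> 0"
proof -
  obtain g where g: "gap \<longlonglongrightarrow> g" using gap_conv by blast
  have "(\<lambda>t. gap t - gap (Suc t)) \<longlonglongrightarrow> g - g"
    by (intro tendsto_diff g) (rule LIMSEQ_Suc[OF g])
  then have lim: "(\<lambda>t. gap t - gap (Suc t)) \<longlonglongrightarrow> 0" by simp
  have e1: "\<forall>\<^sub>F t in sequentially. 0 \<le> E t" using E_nn by (intro always_eventually) blast
  have e2: "\<forall>\<^sub>F t in sequentially. E t \<le> gap t - gap (Suc t)"
  proof (intro always_eventually allI)
    fix t show "E t \<le> gap t - gap (Suc t)" using gap_dec[of t] by linarith
  qed
  show ?thesis by (rule tendsto_sandwich[OF e1 e2 tendsto_const lim])
qed

definition dL where "dL t j = Ld (x (Suc t)) j - Ld (x t) j"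

lemma dL_sq: "j < m \<Longrightarrow> (dL t j)^2 \<le> 2 * mu j * E t"
proof -
  assume j: "j < m"
  have "(dL t j)^2 / (2 * mu j) = (Ld (x t) j - Ld (x (Suc t)) j)^2 / (2 * mu j)"
    unfolding dL_def by (simp add: power2_commute)
  also have "\<dots> \<le> E t" unfolding E_def
    by (rule member_le_sum[where f="\<lambda>j. (Ld (x t) j - Ld (x (Suc t)) j)^2 / (2 * mu j)"])
       (use j in \<open>auto intro!: divide_nonneg_pos simp: mu_pos'\<close>)
  finally have "(dL t j)^2 / (2 * mu j) \<le> E t" .
  then show ?thesis using mu_pos'[OF j] by (simp add: field_simps)
qed

lemma dL_abs: "j < m \<Longrightarrow> \<bar>dL t j\<bar> \<le> sqrt (2 * mu j * E t)"
  using dL_sq real_sqrt_le_mono[of "(dL t j)^2"] by simp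

lemma dL_lim: "j < m \<Longrightarrow> (\<lambda>t. \<bar>dL t j\<bar>) \<longlonglongrightarrow> 0"
proof -
  assume j: "j < m"
  have "(\<lambda>t. sqrt (2 * mu j * E t)) \<longlonglongrightarrow> sqrt (2 * mu j * 0)"
    by (intro tendsto_intros E_lim)
  then have lim: "(\<lambda>t. sqrt (2 * mu j * E t)) \<longlonglongrightarrow> 0" by simp
  have e1: "\<forall>\<^sub>F t in sequentially. 0 \<le> \<bar>dL t j\<bar>" by simp
  have e2: "\<forall>\<^sub>F t in sequentially. \<bar>dL t j\<bar> \<le> sqrt (2 * mu j * E t)"
    using dL_abs[OF j] by (intro always_eventually) blast
  show ?thesis by (rule tendsto_sandwich[OF e1 e2 tendsto_const lim])
qed

definition W where "W t = (\<Sum>j<m. \<Sum>r<n. \<bar>dL (t + r) j\<bar> / mu j)"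

lemma W_lim: "W \<longlonglongrightarrow> 0"
proof -
  have "(\<lambda>t. \<Sum>j<m. \<Sum>r<n. \<bar>dL (t + r) j\<bar> / mu j) \<longlonglongrightarrow> (\<Sum>j<m. \<Sum>r<n. 0 / mu j)"
  proof (intro tendsto_sum)
    fix j r assume jr: "j \<in> {..<m}" "r \<in> {..<n}"
    then have "(\<lambda>t. \<bar>dL (t + r) j\<bar>) \<longlonglongrightarrow> 0"
      using LIMSEQ_ignore_initial_segment[OF dL_lim[of j], of r] by simp
    moreover have "mu j \<noteq> 0" using mu_pos'[of j] jr by auto
    ultimately show "(\<lambda>t. \<bar>dL (t + r) j\<bar> / mu j) \<longlonglongrightarrow> 0 / mu j"
      by (intro tendsto_divide tendsto_const) auto
  qed
  then show ?thesis unfolding W_def by simp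
qed

lemma W_nn: "W t \<ge> 0" unfolding W_def by (intro sum_nonneg divide_nonneg_pos) (auto simp: mu_pos')

lemma window:
  assumes i: "i < n"
  shows "\<exists>\<tau>. t \<le> \<tau> \<and> \<tau> < t + n \<and> \<tau> mod n = i \<and> x (t + n) i = x (Suc \<tau>) i"
proof -
  define \<tau> where "\<tau> = t + (i + n - t mod n) mod n"
  have n0: "n > 0" using n1 by simp
  have t1: "t \<le> \<tau>" "\<tau> < t + n" unfolding \<tau>_def using n0 by auto
  have "\<tau> mod n = (t + (i + n - t mod n)) mod n" unfolding \<tau>_def by (rule mod_add_right_eq)
  also have "\<dots> = (t mod n + (i + n - t mod n)) mod n" by (rule mod_add_left_eq[symmetric])
  also have "t mod n + (i + n - t mod n) = i + n" using modn[of t] by simp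
  finally have t2: "\<tau> mod n = i" using i by simp
  have noti: "u mod n \<noteq> i" if u: "\<tau> < u" "u < t + n" for u
  proof
    assume "u mod n = i"
    then have "u mod n = \<tau> mod n" using t2 by simp
    then have d: "n dvd u - \<tau>" using mod_eq_dvd_iff_nat[of \<tau> u n] u by simp
    have "0 < u - \<tau>" using u by simp
    from dvd_imp_le[OF d this] have "n \<le> u - \<tau>" .
    then show False using u t1 by linarith
  qed
  have "Suc \<tau> + d \<le> t + n \<Longrightarrow> x (Suc \<tau> + d) i = x (Suc \<tau>) i" for d
  proof (induction d)
    case 0 then show ?case by simp
  next
    case (Suc d)
    have "Suc \<tau> + d < t + n" using Suc.prems by simp
    then have "(Suc \<tau> + d) mod n \<noteq> i" using noti[of "Suc \<tau> + d"] by simp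
    then have "x (Suc (Suc \<tau> + d)) i = x (Suc \<tau> + d) i" using x_other by metis
    moreover have "x (Suc \<tau> + d) i = x (Suc \<tau>) i" using Suc.IH Suc.prems by simp
    ultimately show ?case by simp
  qed
  moreover have "Suc \<tau> + (t + n - Suc \<tau>) = t + n" using t1 by simp
  ultimately have "x (t + n) i = x (Suc \<tau>) i" using t1 by (metis order_refl)
  then show ?thesis using t1 t2 by blast
qed

lemma lvdiff:
  assumes tu: "t \<le> u" "u \<le> t + n" and j: "j < m"
  shows "\<bar>lv (x (t + n)) j - lv (x u) j\<bar> \<le> W t"
proof -
  have mu: "mu j > 0" using mu_pos' j by simp
  have "lv (x (t + n)) j - lv (x u) j = (Ld (x (t + n)) j - Ld (x u) j) / mu j"
    unfolding lv_def using mu by (simp add: field_simps)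
  also have "Ld (x (t + n)) j - Ld (x u) j = (\<Sum>s = u..<t + n. dL s j)"
    unfolding dL_def using sum_Suc_diff'[OF tu(2), of "\<lambda>s. Ld (x s) j"] by simp
  finally have "\<bar>lv (x (t + n)) j - lv (x u) j\<bar> = \<bar>\<Sum>s = u..<t + n. dL s j\<bar> / mu j"
    using mu by simp
  also have "\<dots> \<le> (\<Sum>s = u..<t + n. \<bar>dL s j\<bar>) / mu j"
    using mu by (intro divide_right_mono sum_abs) auto
  also have "\<dots> \<le> (\<Sum>s = t..<t + n. \<bar>dL s j\<bar>) / mu j"
    using mu tu by (intro divide_right_mono sum_mono2) auto
  also have "(\<Sum>s = t..<t + n. \<bar>dL s j\<bar>) = (\<Sum>r<n. \<bar>dL (t + r) j\<bar>)"
    using sum.shift_bounds_nat_ivl[of "\<lambda>s. \<bar>dL s j\<bar>" 0 t n]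
    by (simp add: atLeast0LessThan add.commute)
  also have "(\<Sum>r<n. \<bar>dL (t + r) j\<bar>) / mu j = (\<Sum>r<n. \<bar>dL (t + r) j\<bar> / mu j)"
    by (simp add: sum_divide_distrib)
  also have "\<dots> \<le> W t" unfolding W_def
    by (rule member_le_sum[where f="\<lambda>j. \<Sum>r<n. \<bar>dL (t + r) j\<bar> / mu j"])
       (use j in \<open>auto intro!: sum_nonneg divide_nonneg_pos simp: mu_pos'\<close>)
  finally show ?thesis .
qed

lemma main_ineq:
  assumes q: "isopt q"
  shows "Phi (x (t + n)) - Phi q + (\<Sum>j<m. (Ld q j - Ld (x (t + n)) j)^2 / (2 * mu j))
    \<le> W t * (\<Sum>i<n. lam i * (\<Sum>j<m. \<bar>x (t + n) i j - q i j\<bar>))"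
proof -
  define y where "y = x (t + n)"
  have "Phi q - Phi y = (\<Sum>j<m. lv y j * (Ld q j - Ld y j)) + (\<Sum>j<m. (Ld q j - Ld y j)^2 / (2 * mu j))"
    by (rule expand)
  moreover have "(\<Sum>j<m. lv y j * (Ld y j - Ld q j)) = (\<Sum>j<m. - (lv y j * (Ld q j - Ld y j)))"
    by (rule sum.cong) (auto simp: algebra_simps)
  moreover have "(\<Sum>j<m. - (lv y j * (Ld q j - Ld y j))) = - (\<Sum>j<m. lv y j * (Ld q j - Ld y j))"
    by (rule sum_negf)
  ultimately have "Phi y - Phi q + (\<Sum>j<m. (Ld q j - Ld y j)^2 / (2 * mu j)) = (\<Sum>j<m. lv y j * (Ld y j - Ld q j))"
    by linarith
  also have "\<dots> = (\<Sum>i<n. lam i * (\<Sum>j<m. lv y j * (y i j - q i j)))" by (rule sum_swap_lv)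
  also have "\<dots> \<le> (\<Sum>i<n. lam i * (W t * (\<Sum>j<m. \<bar>y i j - q i j\<bar>)))"
  proof (rule sum_mono, rule mult_left_mono)
    fix i assume i: "i \<in> {..<n}"
    then show "0 \<le> lam i" using lam_pos' by (simp add: less_imp_le)
    obtain \<tau> where tau: "t \<le> \<tau>" "\<tau> < t + n" "\<tau> mod n = i" "x (t + n) i = x (Suc \<tau>) i"
      using window i by blast
    have qi: "q i \<in> S" using q i P_simp unfolding isopt_def by auto
    have vi: "(\<Sum>j<m. lv (x (Suc \<tau>)) j * (q i j - y i j)) \<ge> 0"
      using VI_t[of \<tau>] qi tau unfolding y_def by auto
    have "(\<Sum>j<m. lv y j * (y i j - q i j)) \<le> (\<Sum>j<m. lv y j * (y i j - q i j)) + (\<Sum>j<m. lv (x (Suc \<tau>)) j * (q i j - y i j))"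
      using vi by simp
    also have "\<dots> = (\<Sum>j<m. lv y j * (y i j - q i j) + lv (x (Suc \<tau>)) j * (q i j - y i j))"
      by (rule sum.distrib[symmetric])
    also have "\<dots> = (\<Sum>j<m. (lv y j - lv (x (Suc \<tau>)) j) * (y i j - q i j))"
      by (rule sum.cong) (auto simp: algebra_simps)
    also have "\<dots> \<le> (\<Sum>j<m. W t * \<bar>y i j - q i j\<bar>)"
    proof (rule sum_mono)
      fix j assume j: "j \<in> {..<m}"
      have "\<bar>lv y j - lv (x (Suc \<tau>)) j\<bar> \<le> W t" unfolding y_def
        by (rule lvdiff) (use tau j in auto)
      then have "\<bar>(lv y j - lv (x (Suc \<tau>)) j) * (y i j - q i j)\<bar> \<le> W t * \<bar>y i j - q i j\<bar>"
        by (simp add: abs_mult mult_right_mono)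
      then show "(lv y j - lv (x (Suc \<tau>)) j) * (y i j - q i j) \<le> W t * \<bar>y i j - q i j\<bar>" by linarith
    qed
    finally show "(\<Sum>j<m. lv y j * (y i j - q i j)) \<le> W t * (\<Sum>j<m. \<bar>y i j - q i j\<bar>)"
      by (simp add: sum_distrib_left)
  qed
  also have "\<dots> = W t * (\<Sum>i<n. lam i * (\<Sum>j<m. \<bar>y i j - q i j\<bar>))"
    by (simp add: sum_distrib_left mult_ac)
  finally show ?thesis unfolding y_def .
qed

end


context LBD begin

lemma absdiff_S: "b \<in> S \<Longrightarrow> w \<in> S \<Longrightarrow> (\<Sum>j<m. \<bar>b j - w j\<bar>) \<le> 2"
proof -
  assume b: "b \<in> S" and w: "w \<in> S"
  have "(\<Sum>j<m. \<bar>b j - w j\<bar>) \<le> (\<Sum>j<m. b j + w j)"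
  proof (rule sum_mono)
    fix j assume "j \<in> {..<m}"
    then have "b j \<ge> 0" "w j \<ge> 0" using S_simp(1)[OF b] S_simp(1)[OF w] by auto
    then show "\<bar>b j - w j\<bar> \<le> b j + w j" by (simp add: abs_le_iff)
  qed
  also have "\<dots> = 2" using S_simp(2)[OF b] S_simp(2)[OF w] by (simp add: sum.distrib)
  finally show ?thesis .
qed

lemma dist_bound: "a \<in> P \<Longrightarrow> q \<in> P \<Longrightarrow> (\<Sum>i<n. lam i * (\<Sum>j<m. \<bar>a i j - q i j\<bar>)) \<le> 2 * Lam"
proof -
  assume a: "a \<in> P" and q: "q \<in> P"
  have "(\<Sum>i<n. lam i * (\<Sum>j<m. \<bar>a i j - q i j\<bar>)) \<le> (\<Sum>i<n. lam i * 2)"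
    by (rule sum_mono, rule mult_left_mono) (use absdiff_S P_simp a q lam_pos' in \<open>auto intro: less_imp_le\<close>)
  also have "\<dots> = (\<Sum>i<n. lam i) * 2" by (rule sum_distrib_right[symmetric])
  also have "\<dots> = 2 * Lam" unfolding Lam_def by simp
  finally show ?thesis .
qed

lemma sq_nn: "(\<Sum>j<m. (A j)^2 / (2 * mu j)) \<ge> 0"
  by (intro sum_nonneg divide_nonneg_pos) (auto simp: mu_pos')

lemma gap_lim: "gap \<longlonglongrightarrow> 0"
proof -
  have b: "gap (t + n) \<le> 2 * Lam * W t" for t
  proof -
    have "gap (t + n) \<le> W t * (\<Sum>i<n. lam i * (\<Sum>j<m. \<bar>x (t + n) i j - p0 i j\<bar>))"
      using main_ineq[OF p0_opt, of t] sq_nn[of "\<lambda>j. Ld p0 j - Ld (x (t + n)) j"] unfolding gap_def by linarith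
    also have "\<dots> \<le> W t * (2 * Lam)"
      by (rule mult_left_mono[OF dist_bound[OF xP] W_nn]) (use p0_opt isopt_def in auto)
    finally show ?thesis by (simp add: mult_ac)
  qed
  have lim: "(\<lambda>t. 2 * Lam * W t) \<longlonglongrightarrow> 2 * Lam * 0" by (intro tendsto_intros W_lim)
  have "(\<lambda>t. gap (t + n)) \<longlonglongrightarrow> 0"
    by (rule tendsto_sandwich[OF _ _ tendsto_const]) (use b gap_nn lim in auto)
  then show ?thesis by (rule LIMSEQ_offset)
qed

lemma D_sq: "j < m \<Longrightarrow> (Ld (x t) j - Ls j)^2 \<le> 2 * mu j * gap t"
proof -
  assume j: "j < m"
  have "(Ld (x t) j - Ls j)^2 / (2 * mu j) \<le> (\<Sum>j<m. (Ld (x t) j - Ld p0 j)^2 / (2 * mu j))"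
  proof -
    have "(\<Sum>j<m. (Ld (x t) j - Ld p0 j)^2 / (2 * mu j)) = (\<Sum>j<m. (Ld (x t) j - Ls j)^2 / (2 * mu j))"
      by (rule sum.cong) (use p0_opt isopt_def in auto)
    moreover have "(Ld (x t) j - Ls j)^2 / (2 * mu j) \<le> (\<Sum>j<m. (Ld (x t) j - Ls j)^2 / (2 * mu j))"
      by (rule member_le_sum[where f="\<lambda>j. (Ld (x t) j - Ls j)^2 / (2 * mu j)"])
         (use j in \<open>auto intro!: divide_nonneg_pos simp: mu_pos'\<close>)
    ultimately show ?thesis by simp
  qed
  also have "\<dots> \<le> gap t" using opt_min[OF p0_opt xP[of t]] unfolding gap_def by simp
  finally show ?thesis using mu_pos'[OF j] by (simp add: field_simps)
qed

lemma D_lim: "j < m \<Longrightarrow> (\<lambda>t. (Ld (x t) j - Ls j) / mu j) \<longlonglongrightarrow> 0"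
proof -
  assume j: "j < m"
  have mu: "mu j > 0" using mu_pos' j by simp
  have lim: "(\<lambda>t. sqrt (2 * mu j * gap t) / mu j) \<longlonglongrightarrow> sqrt (2 * mu j * 0) / mu j"
    by (intro tendsto_intros gap_lim) (use mu in auto)
  have b: "\<bar>(Ld (x t) j - Ls j) / mu j\<bar> \<le> sqrt (2 * mu j * gap t) / mu j" for t
  proof -
    have "\<bar>Ld (x t) j - Ls j\<bar> \<le> sqrt (2 * mu j * gap t)"
      using real_sqrt_le_mono[OF D_sq[OF j, of t]] by simp
    then show ?thesis using mu by (simp add: divide_right_mono)
  qed
  have "(\<lambda>t. \<bar>(Ld (x t) j - Ls j) / mu j\<bar>) \<longlonglongrightarrow> 0"
    by (rule tendsto_sandwich[OF _ _ tendsto_const]) (use b lim in auto)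
  then show ?thesis by (rule tendsto_rabs_zero_cancel)
qed

lemma Sst_ex: "\<exists>k<m. Sst k"
proof (rule ccontr)
  assume "\<not> (\<exists>k<m. Sst k)"
  then have "\<forall>k<m. Ls k = 0" unfolding Sst_def Ls_def by auto
  then have "(\<Sum>k<m. Ls k) = 0" by simp
  then show False using cs(2) Lam_pos unfolding Ls_def by simp
qed

lemma out_ev: "\<exists>T. \<forall>\<tau>\<ge>T. \<forall>j<m. \<not> Sst j \<longrightarrow> x (Suc \<tau>) (\<tau> mod n) j = 0"
proof -
  obtain k where k: "k < m" "Sst k" using Sst_ex by blast
  have "\<forall>\<^sub>F t in sequentially. \<forall>j\<in>{..<m}. \<not> Sst j \<longrightarrow> (Ld (x t) k - Ls k) / mu k < s0 j / mu j - cs"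
  proof (rule eventually_ball_finite, simp, intro ballI)
    fix j assume j: "j \<in> {..<m}"
    show "\<forall>\<^sub>F t in sequentially. \<not> Sst j \<longrightarrow> (Ld (x t) k - Ls k) / mu k < s0 j / mu j - cs"
    proof (cases "Sst j")
      case True then show ?thesis by simp
    next
      case False
      then have "s0 j / mu j - cs > 0" using mu_pos'[of j] j unfolding Sst_def by (simp add: field_simps)
      from order_tendstoD(2)[OF D_lim[OF k(1)] this] show ?thesis by (rule eventually_mono) simp
    qed
  qed
  then obtain T where T: "\<And>t. t \<ge> T \<Longrightarrow> \<forall>j\<in>{..<m}. \<not> Sst j \<longrightarrow> (Ld (x t) k - Ls k) / mu k < s0 j / mu j - cs"
    unfolding eventually_sequentially by blast
  have "x (Suc \<tau>) (\<tau> mod n) j = 0" if tau: "\<tau> \<ge> T" and j: "j < m" "\<not> Sst j" for \<tau> j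
  proof (rule ccontr)
    assume ne: "x (Suc \<tau>) (\<tau> mod n) j \<noteq> 0"
    define z where "z = x (Suc \<tau>)"
    have bS: "z (\<tau> mod n) \<in> S" unfolding z_def using P_simp xP modn by blast
    then have "z (\<tau> mod n) j > 0" using S_simp(1)[OF bS j(1)] ne unfolding z_def by simp
    from VI_support[OF bS VI_t[of \<tau>, folded z_def] j(1) k(1) this]
    have le: "lv z j \<le> lv z k" .
    have mj: "mu j > 0" and mk: "mu k > 0" using mu_pos' j k by auto
    have "lv z j \<ge> s0 j / mu j" unfolding lv_def using Ld_nn[OF j(1)] xP mj unfolding z_def
      by (simp add: divide_right_mono)
    moreover have "lv z k = cs + (Ld z k - Ls k) / mu k"
      unfolding lv_def Ls_def using k(2) mk unfolding Sst_def by (simp add: field_simps)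
    moreover have "(Ld z k - Ls k) / mu k < s0 j / mu j - cs"
      using T[of "Suc \<tau>"] tau j unfolding z_def by simp
    ultimately show False using le by simp
  qed
  then show ?thesis by blast
qed

lemma out_ev2: "\<exists>T. \<forall>t\<ge>T. \<forall>i<n. \<forall>j<m. \<not> Sst j \<longrightarrow> x (t + n) i j = 0"
proof -
  obtain T where T: "\<forall>\<tau>\<ge>T. \<forall>j<m. \<not> Sst j \<longrightarrow> x (Suc \<tau>) (\<tau> mod n) j = 0" using out_ev by blast
  have "x (t + n) i j = 0" if h: "t \<ge> T" "i < n" "j < m" "\<not> Sst j" for t i j
  proof -
    obtain \<tau> where tau: "t \<le> \<tau>" "\<tau> < t + n" "\<tau> mod n = i" "x (t + n) i = x (Suc \<tau>) i"
      using window[OF h(2)] by blast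
    show ?thesis using T tau h by auto
  qed
  then show ?thesis by blast
qed

end


context LBD begin

lemma Esum: "(\<Sum>r<k. E (t + r)) \<le> gap t - gap (t + k)"
proof (induction k)
  case 0 then show ?case by simp
next
  case (Suc k)
  have "(\<Sum>r<Suc k. E (t + r)) = (\<Sum>r<k. E (t + r)) + E (t + k)" by simp
  also have "\<dots> \<le> gap t - gap (t + k) + (gap (t + k) - gap (Suc (t + k)))"
    using Suc gap_dec[of "t + k"] by linarith
  finally show ?case by simp
qed

definition K where "K = (\<Sum>j<m. 1 / mu j)"
definition M where "M = (\<Sum>j<m. mu j)"

lemma K_ge: "j < m \<Longrightarrow> 1 / mu j \<le> K"
  unfolding K_def by (rule member_le_sum[where f="\<lambda>j. 1 / mu j"]) (auto simp: mu_pos' less_imp_le)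

lemma W_sq: "(W t)^2 \<le> 2 * K * real m ^ 2 * real n * (gap t - gap (t + n))"
proof -
  define G where "G j r = \<bar>dL (t + r) j\<bar> / mu j" for j r
  define F where "F j = (\<Sum>r<n. G j r)" for j
  define dg where "dg = gap t - gap (t + n)"
  have W: "W t = (\<Sum>j<m. F j)" unfolding W_def F_def G_def ..
  have dg0: "dg \<ge> 0" unfolding dg_def using gap_mono[of t "t + n"] by simp
  have K0: "K \<ge> 0" unfolding K_def by (intro sum_nonneg) (auto simp: mu_pos' less_imp_le)
  have G2: "(G j r)^2 \<le> 2 * K * E (t + r)" if j: "j < m" for j r
  proof -
    have mu: "mu j > 0" using mu_pos' j by simp
    have "(G j r)^2 = (dL (t + r) j)^2 / (mu j)^2" unfolding G_def by (simp add: power_divide)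
    also have "\<dots> \<le> (2 * mu j * E (t + r)) / (mu j)^2"
      by (rule divide_right_mono[OF dL_sq[OF j]]) simp
    also have "\<dots> = 2 * E (t + r) * (1 / mu j)" using mu by (simp add: power2_eq_square field_simps)
    also have "\<dots> \<le> 2 * E (t + r) * K"
      by (rule mult_left_mono[OF K_ge[OF j]]) (use E_nn in simp)
    finally show ?thesis by (simp add: mult_ac)
  qed
  have F2: "(F j)^2 \<le> 2 * K * dg * real n" if j: "j < m" for j
  proof -
    have "(F j)^2 \<le> (\<Sum>r<n. (G j r)^2) * real (card {..<n::nat})"
      unfolding F_def by (rule sum_squared_le_sum_of_squares)
    also have "\<dots> \<le> (\<Sum>r<n. 2 * K * E (t + r)) * real n"
      unfolding card_lessThan by (rule mult_right_mono) (auto intro!: sum_mono G2[OF j])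
    also have "(\<Sum>r<n. 2 * K * E (t + r)) = 2 * K * (\<Sum>r<n. E (t + r))" by (simp add: sum_distrib_left)
    also have "\<dots> \<le> 2 * K * dg" unfolding dg_def by (rule mult_left_mono[OF Esum]) (use K0 in simp)
    finally show ?thesis by (simp add: mult_right_mono)
  qed
  have "(W t)^2 \<le> (\<Sum>j<m. (F j)^2) * real (card {..<m::nat})"
    unfolding W by (rule sum_squared_le_sum_of_squares)
  also have "\<dots> \<le> (\<Sum>j<m. 2 * K * dg * real n) * real m"
    unfolding card_lessThan by (rule mult_right_mono, rule sum_mono) (auto intro: F2)
  also have "\<dots> = 2 * K * real m ^ 2 * real n * dg" by (simp add: power2_eq_square mult_ac)
  finally show ?thesis unfolding dg_def .
qed

lemma CS:
  "(\<Sum>j<m. \<bar>D j\<bar>)^2 \<le> 2 * M * (\<Sum>j<m. (D j)^2 / (2 * mu j))"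
proof -
  define a where "a j = \<bar>D j\<bar> / sqrt (2 * mu j)" for j
  define b where "b j = sqrt (2 * mu j)" for j
  have ab: "j < m \<Longrightarrow> a j * b j = \<bar>D j\<bar>" for j
    unfolding a_def b_def using mu_pos'[of j] by simp
  have a2: "j < m \<Longrightarrow> (a j)^2 = (D j)^2 / (2 * mu j)" for j
    unfolding a_def using mu_pos'[of j] by (simp add: power_divide)
  have b2: "j < m \<Longrightarrow> (b j)^2 = 2 * mu j" for j
    unfolding b_def using mu_pos'[of j] by simp
  have "(\<Sum>j<m. \<bar>D j\<bar>) = (\<Sum>j<m. a j * b j)" using ab by simp
  then have "(\<Sum>j<m. \<bar>D j\<bar>)^2 \<le> (\<Sum>j<m. (a j)^2) * (\<Sum>j<m. (b j)^2)"
    using Cauchy_Schwarz_ineq_sum[of a b "{..<m}"] by simp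
  also have "\<dots> = (\<Sum>j<m. (D j)^2 / (2 * mu j)) * (2 * M)"
    using a2 b2 unfolding M_def by (simp add: sum_distrib_left)
  finally show ?thesis by (simp add: mult_ac)
qed

lemma M_pos: "M > 0"
proof -
  have "mu 0 \<le> M" unfolding M_def
    by (rule member_le_sum[where f=mu]) (use m1 in \<open>auto simp: mu_pos' less_imp_le\<close>)
  then show ?thesis using mu_pos'[of 0] m1 by simp
qed

lemma rate: "\<exists>T. \<forall>t\<ge>T. gap (t + n) \<le> 16 * M * K * real m ^ 2 * real n * (gap t - gap (t + n))"
proof -
  obtain T where T: "\<forall>t\<ge>T. \<forall>i<n. \<forall>j<m. \<not> Sst j \<longrightarrow> x (t + n) i j = 0" using out_ev2 by blast
  have "gap (t + n) \<le> 16 * M * K * real m ^ 2 * real n * (gap t - gap (t + n))" if t: "t \<ge> T" for t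
  proof -
    define y where "y = x (t + n)"
    define D where "D j = Ld y j - Ls j" for j
    define A where "A = (\<Sum>j<m. \<bar>D j\<bar>)"
    define Z where "Z = (\<Sum>j<m. (D j)^2 / (2 * mu j))"
    obtain q where q: "isopt q" "(\<Sum>i<n. lam i * (\<Sum>j<m. \<bar>y i j - q i j\<bar>)) \<le> 2 * A"
      using hoffman[OF xP[of "t + n"]] T t unfolding y_def A_def D_def by blast
    have Zq: "(\<Sum>j<m. (Ld q j - Ld y j)^2 / (2 * mu j)) = Z"
      unfolding Z_def D_def by (rule sum.cong) (use q(1) in \<open>auto simp: isopt_def power2_commute\<close>)
    have mi: "gap (t + n) + Z \<le> W t * (\<Sum>i<n. lam i * (\<Sum>j<m. \<bar>y i j - q i j\<bar>))"
      using main_ineq[OF q(1), of t] opt_Phi[OF q(1)] Zq unfolding gap_def y_def by simp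
    have W0: "W t \<ge> 0" by (rule W_nn)
    have key: "gap (t + n) + Z \<le> 2 * W t * A"
      using mi mult_left_mono[OF q(2) W0] by simp
    have Z0: "Z \<ge> 0" unfolding Z_def by (rule sq_nn)
    have A0: "A \<ge> 0" unfolding A_def by (simp add: sum_nonneg)
    have cs: "A^2 \<le> 2 * M * Z" unfolding A_def Z_def by (rule CS)
    have AW: "A \<le> 4 * M * W t"
    proof (cases "A = 0")
      case True then show ?thesis using M_pos W0 by simp
    next
      case False
      then have Apos: "A > 0" using A0 by simp
      have "A^2 \<le> 2 * M * (2 * W t * A)"
        using cs key gap_nn[of "t + n"] M_pos by (smt (verit) mult_left_mono)
      then have "A * A \<le> A * (4 * M * W t)" by (simp add: power2_eq_square mult_ac)
      then show ?thesis using Apos by simp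
    qed
    have "gap (t + n) \<le> 2 * W t * A" using key Z0 by simp
    also have "\<dots> \<le> 2 * W t * (4 * M * W t)" by (rule mult_left_mono[OF AW]) (use W0 in simp)
    also have "\<dots> = 8 * M * (W t)^2" by (simp add: power2_eq_square)
    also have "\<dots> \<le> 8 * M * (2 * K * real m ^ 2 * real n * (gap t - gap (t + n)))"
      by (rule mult_left_mono[OF W_sq]) (use M_pos in simp)
    also have "\<dots> = 16 * M * K * real m ^ 2 * real n * (gap t - gap (t + n))" by algebra
    finally show ?thesis .
  qed
  then show ?thesis by blast
qed

end


context LBD begin

lemma K_pos: "K > 0"
proof -
  have "1 / mu 0 \<le> K" using K_ge m1 by simp
  moreover have "1 / mu 0 > 0" using mu_pos'[of 0] m1 by simp
  ultimately show ?thesis by linarith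
qed

lemma geom: "\<exists>T G0 \<theta>. 0 < \<theta> \<and> \<theta> < 1 \<and> G0 \<ge> 0 \<and> (\<forall>t\<ge>T. gap t \<le> G0 * \<theta> ^ t)"
proof -
  define C where "C = 16 * M * K * real m ^ 2 * real n"
  have C0: "C > 0" unfolding C_def using M_pos K_pos m1 n1 by simp
  obtain T where T: "\<forall>t\<ge>T. gap (t + n) \<le> C * (gap t - gap (t + n))" using rate unfolding C_def by blast
  define \<rho> where "\<rho> = C / (1 + C)"
  have \<rho>: "0 < \<rho>" "\<rho> < 1" unfolding \<rho>_def using C0 by auto
  have step: "gap (t + n) \<le> \<rho> * gap t" if "t \<ge> T" for t
  proof -
    have "gap (t + n) \<le> C * (gap t - gap (t + n))" using T that by blast
    then have "gap (t + n) * (1 + C) \<le> C * gap t" by (simp add: algebra_simps)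
    then show ?thesis unfolding \<rho>_def using C0 by (simp add: field_simps)
  qed
  have n0: "n > 0" using n1 by simp
  define \<theta> where "\<theta> = root n \<rho>"
  have th: "0 < \<theta>" "\<theta> < 1" "\<theta> ^ n = \<rho>" unfolding \<theta>_def using \<rho> n0
    by (auto simp: real_root_pow_pos2)
  define G0 where "G0 = gap T / \<theta> ^ (T + n)"
  have G00: "G0 \<ge> 0" unfolding G0_def using gap_nn th by simp
  have "gap t \<le> G0 * \<theta> ^ t" if "t \<ge> T" for t
    using that
  proof (induction t rule: less_induct)
    case (less t)
    show ?case
    proof (cases "t < T + n")
      case True
      have "gap t \<le> gap T" by (rule gap_mono) (use less in simp)
      also have "gap T = G0 * \<theta> ^ (T + n)" unfolding G0_def using th by simp
      also have "\<dots> \<le> G0 * \<theta> ^ t"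
        by (rule mult_left_mono[OF power_decreasing G00]) (use True th in auto)
      finally show ?thesis .
    next
      case False
      define s where "s = t - n"
      have s: "t = s + n" "s \<ge> T" "s < t" unfolding s_def using False n0 by auto
      have "gap t \<le> \<rho> * gap s" using step[OF s(2)] s(1) by simp
      also have "\<dots> \<le> \<rho> * (G0 * \<theta> ^ s)" using less.IH[OF s(3) s(2)] \<rho> by simp
      also have "\<dots> = G0 * \<theta> ^ t" using s(1) th(3) by (simp add: power_add mult_ac)
      finally show ?thesis .
    qed
  qed
  then show ?thesis using th G00 by blast
qed

lemma step_bound:
  assumes i: "i < n" and j: "j < m"
  shows "\<bar>x (Suc t) i j - x t i j\<bar> \<le> sqrt (2 * mu j) / lam i * sqrt (gap t)"
proof (cases "i = t mod n")
  case False
  have "0 \<le> sqrt (2 * mu j) / lam i * sqrt (gap t)" using mu_pos'[OF j] gap_nn[of t] lam_pos'[OF i]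
    by (intro divide_nonneg_pos mult_nonneg_nonneg) auto
  then show ?thesis using x_other[OF False] by simp
next
  case True
  obtain b where b: "x (Suc t) = (x t)(t mod n := b)" using stepex by blast
  have "dL t j = lam i * (x (Suc t) i j - x t i j)"
    unfolding dL_def b using Ld_upd[OF i, of "x t" b j] True by simp
  moreover have "\<bar>dL t j\<bar> \<le> sqrt (2 * mu j * gap t)"
  proof -
    have "E t \<le> gap t" using gap_dec[of t] gap_nn[of "Suc t"] by simp
    then have "2 * mu j * E t \<le> 2 * mu j * gap t" using mu_pos'[OF j] by simp
    then show ?thesis using dL_abs[OF j, of t] real_sqrt_le_mono by (meson order_trans)
  qed
  ultimately have "lam i * \<bar>x (Suc t) i j - x t i j\<bar> \<le> sqrt (2 * mu j) * sqrt (gap t)"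
    using lam_pos'[OF i] by (simp add: abs_mult real_sqrt_mult)
  then show ?thesis using lam_pos'[OF i] by (simp add: field_simps)
qed

lemma x_conv: "i < n \<Longrightarrow> j < m \<Longrightarrow> convergent (\<lambda>t. x t i j)"
proof -
  assume i: "i < n" and j: "j < m"
  obtain T G0 \<theta> where g: "0 < \<theta>" "\<theta> < 1" "G0 \<ge> 0" "\<forall>t\<ge>T. gap t \<le> G0 * \<theta> ^ t"
    using geom by blast
  define c where "c = sqrt (2 * mu j) / lam i"
  have c0: "c \<ge> 0" unfolding c_def using lam_pos'[OF i] mu_pos'[OF j] by simp
  define f where "f t = x (Suc t) i j - x t i j" for t
  have sg: "summable (\<lambda>t. c * sqrt G0 * sqrt \<theta> ^ t)"
    by (rule summable_mult, rule summable_geometric) (use g in simp)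
  have "summable f"
  proof (rule summable_comparison_test'[OF sg])
    fix t assume t: "T \<le> t"
    have "norm (f t) \<le> c * sqrt (gap t)" unfolding f_def c_def using step_bound[OF i j] by simp
    also have "\<dots> \<le> c * sqrt (G0 * \<theta> ^ t)"
      by (rule mult_left_mono[OF real_sqrt_le_mono c0]) (use g t in simp)
    also have "\<dots> = c * sqrt G0 * sqrt \<theta> ^ t" by (simp add: real_sqrt_mult real_sqrt_power)
    finally show "norm (f t) \<le> c * sqrt G0 * sqrt \<theta> ^ t" .
  qed
  then have "(\<lambda>t. \<Sum>s<t. f s) \<longlonglongrightarrow> suminf f" by (rule summable_LIMSEQ)
  then have "(\<lambda>t. x 0 i j + (\<Sum>s<t. f s)) \<longlonglongrightarrow> x 0 i j + suminf f" by (intro tendsto_intros)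
  moreover have "x 0 i j + (\<Sum>s<t. f s) = x t i j" for t
    unfolding f_def using sum_lessThan_telescope[of "\<lambda>s. x s i j" t] by simp
  ultimately show ?thesis unfolding convergent_def by auto
qed

definition alim where "alim = (\<lambda>i\<in>{..<n}. \<lambda>j\<in>{..<m}. lim (\<lambda>t. x t i j))"

lemma alim_lim: "i < n \<Longrightarrow> j < m \<Longrightarrow> (\<lambda>t. x t i j) \<longlonglongrightarrow> alim i j"
  unfolding alim_def using x_conv convergent_LIMSEQ_iff by auto

lemma alim_P: "alim \<in> P"
proof -
  have "alim i \<in> S" if i: "i < n" for i
  proof -
    have nn: "alim i j \<ge> 0" if j: "j < m" for j
    proof (rule LIMSEQ_le_const[OF alim_lim[OF i j]])
      show "\<exists>N. \<forall>t\<ge>N. 0 \<le> x t i j" using S_simp(1)[OF P_simp[OF xP i] j] by blast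
    qed
    have "(\<lambda>t. \<Sum>j<m. x t i j) \<longlonglongrightarrow> (\<Sum>j<m. alim i j)"
      by (intro tendsto_sum) (use alim_lim i in auto)
    moreover have "(\<lambda>t. \<Sum>j<m. x t i j) = (\<lambda>t. 1)" using S_simp(2)[OF P_simp[OF xP i]] by simp
    ultimately have "(\<Sum>j<m. alim i j) = 1" using LIMSEQ_unique tendsto_const by metis
    moreover have "alim i \<in> {..<m} \<rightarrow>\<^sub>E UNIV" unfolding alim_def using i by auto
    ultimately show ?thesis unfolding action_simplex_def using nn by auto
  qed
  then show ?thesis unfolding action_profiles_def by (auto simp: alim_def)
qed

lemma Phi_lim: "(\<lambda>t. Phi (x t)) \<longlonglongrightarrow> Phi alim"
proof -
  have L: "(\<lambda>t. Ld (x t) j) \<longlonglongrightarrow> Ld alim j" if j: "j < m" for j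
    unfolding Ld_def by (intro tendsto_sum tendsto_mult tendsto_const) (use alim_lim j in auto)
  show ?thesis unfolding Phi_def
    by (intro tendsto_sum tendsto_divide tendsto_power tendsto_add tendsto_const) (use L mu_pos' in force)+
qed

lemma final: "pure_NE n m lam mu s0 alim \<and> (\<forall>i<n. \<forall>j<m. (\<lambda>t. x t i j) \<longlonglongrightarrow> alim i j)"
proof
  have "(\<lambda>t. Phi (x t) - Phi p0) \<longlonglongrightarrow> 0" using gap_lim unfolding gap_def by simp
  then have "(\<lambda>t. Phi (x t) - Phi p0 + Phi p0) \<longlonglongrightarrow> 0 + Phi p0" by (intro tendsto_intros)
  then have "(\<lambda>t. Phi (x t)) \<longlonglongrightarrow> Phi p0" by simp
  then have "Phi alim = Phi p0" using Phi_lim LIMSEQ_unique by blast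
  then show "pure_NE n m lam mu s0 alim" using min_NE[OF alim_P p0_opt] by simp
  show "\<forall>i<n. \<forall>j<m. (\<lambda>t. x t i j) \<longlonglongrightarrow> alim i j" using alim_lim by blast
qed

end

theorem theorem1:
  fixes n m :: nat and lam mu s0 :: "nat \<Rightarrow> real"
  assumes "n \<ge> 1" and "m \<ge> 1"
    and "\<forall>j<m. mu j > 0" and "\<forall>j<m. s0 j \<ge> 0" and "\<forall>i<n. lam i > 0"
  shows "(\<exists>\<Phi> :: (nat \<Rightarrow> nat \<Rightarrow> real) \<Rightarrow> real.
            \<forall>i<n. \<forall>a\<in>action_profiles n m. \<forall>b\<in>action_simplex m.
              \<Phi> a - \<Phi> (a(i := b)) = cost n m lam mu s0 a i - cost n m lam mu s0 (a(i := b)) i)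
       \<and> (\<exists>a. pure_NE n m lam mu s0 a)
       \<and> (\<forall>x. br_dynamics n m lam mu s0 x \<longrightarrow>
            (\<exists>a. pure_NE n m lam mu s0 a \<and>
                 (\<forall>i<n. \<forall>j<m. (\<lambda>t. x t i j) \<longlonglongrightarrow> a i j)))"
proof -
  interpret LB n m lam mu s0 using assms by unfold_locales auto
  have p1: "\<exists>\<Phi> :: (nat \<Rightarrow> nat \<Rightarrow> real) \<Rightarrow> real.
            \<forall>i<n. \<forall>a\<in>action_profiles n m. \<forall>b\<in>action_simplex m.
              \<Phi> a - \<Phi> (a(i := b)) = cost n m lam mu s0 a i - cost n m lam mu s0 (a(i := b)) i"
    by (rule exI[of _ Phi]) (auto simp: pot)
  have p2: "\<exists>a. pure_NE n m lam mu s0 a"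
    using min_NE[OF _ p0_opt] p0_opt unfolding isopt_def by auto
  have p3: "\<forall>x. br_dynamics n m lam mu s0 x \<longrightarrow>
            (\<exists>a. pure_NE n m lam mu s0 a \<and> (\<forall>i<n. \<forall>j<m. (\<lambda>t. x t i j) \<longlonglongrightarrow> a i j))"
  proof (intro allI impI)
    fix x assume "br_dynamics n m lam mu s0 x"
    then interpret LBD n m lam mu s0 x by unfold_locales
    show "\<exists>a. pure_NE n m lam mu s0 a \<and> (\<forall>i<n. \<forall>j<m. (\<lambda>t. x t i j) \<longlonglongrightarrow> a i j)"
      using final by blast
  qed
  show ?thesis using p1 p2 p3 by blast
qed

end
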